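(* For $n\ge2$, the topological operads $\mathcal{P}_{\mathsf{CD_n}}$ and $\mathcal{P}_{\mathsf{Disc_{n-1}}}$ are homotopy equivalent.
   Context: $\mathbb{R}^{1,n-1}$ is $\mathbb{R}^n$ (coordinates $(t,x_2,\dots,x_n)$) with the standard time-oriented Lorentzian metric $\eta$ of signature $(1,n-1)$; a curve $\gamma$ is causal if $\eta(\gamma',\gamma')\le 0$ throughout, and subsets $S,T$ are causally disjoint if no causal curve joins a point of $S$ to a point of $T$. $D^m$ is the Euclidean unit disc; $\mathrm{Rect}(D^m,D^m)$ is the space (compact-open topology) of rectilinear embeddings $\vec x\mapsto r\vec x+\vec b$ ($r>0$) of $D^m$ into $D^m$. For a one-object $\mathsf{Top}$-enriched category with a symmetric, composition-stable relation $\perp$ on pairs of endomorphisms, the associated (prefactorization) operad $\mathcal{P}$ has $k$-ary operation space $\mathcal{P}(k)=\{(f_1,\dots,f_k)\in\mathrm{Hom}(\ast,\ast)^k : (f_i,f_j)\in\perp \ \forall i\ne j\}$, with composition induced by composition of maps and $\Sigma_k$ acting by permuting entries. $\mathcal{P}_{\mathsf{CD_n}}$ is the operad for $\mathrm{Hom}=\mathrm{Rect}(D^n,D^n)$ with $(f,g)\in\perp$ iff $f(D^n)$ and $g(D^n)$ are causally disjoint in $\mathbb{R}^{1,n-1}$. $\mathcal{P}_{\mathsf{Disc_{m}}}$ is the operad for $\mathrm{Hom}=\mathrm{Rect}(D^m,D^m)$ with $(f,g)\in\perp$ iff the interiors of $f(D^m)$ and $g(D^m)$ are disjoint (this is an $\mathbb{E}_m$-operad,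 the little $m$-discs operad). *)

theory Defs
  imports "HOL-Analysis.Analysis"
begin

(* Points of R^m are encoded as functions nat => real vanishing at indices >= m.
   In R^{1,n-1}, index 0 is the time coordinate t, indices 1..n-1 are x_2..x_n. *)
type_synonym point = "nat \<Rightarrow> real"

(* A rectilinear embedding  x |-> r x + b  is encoded by the pair (r, b). *)
type_synonym emb = "real \<times> point"

(* operations of arity k: k-tuples of embeddings, encoded as nat => emb,
   entries at positions >= k are fixed to the identity embedding *)
type_synonym tup = "nat \<Rightarrow> emb"

definition eucl_norm :: "nat \<Rightarrow> point \<Rightarrow> real" where
  "eucl_norm m v = sqrt (\<Sum>i<m. (v i)\<^sup>2)"

(* Rect(D^m, D^m): r > 0 and the image disc r D^m + b lies in D^m *)
definition rect :: "nat \<Rightarrow> emb set" where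
  "rect m = {(r, b). 0 < r \<and> (\<forall>i\<ge>m. b i = 0) \<and> r + eucl_norm m b \<le> 1}"

definition ecomp :: "emb \<Rightarrow> emb \<Rightarrow> emb" where
  "ecomp f g = (fst f * fst g, (\<lambda>i. fst f * snd g i + snd f i))"

definition eid :: emb where
  "eid = (1, (\<lambda>_. 0))"

definition disc_img :: "nat \<Rightarrow> emb \<Rightarrow> point set" where
  "disc_img m f = {p. (\<forall>i\<ge>m. p i = 0) \<and> eucl_norm m (\<lambda>i. p i - snd f i) \<le> fst f}"

definition disc_int :: "nat \<Rightarrow> emb \<Rightarrow> point set" where
  "disc_int m f = {p. (\<forall>i\<ge>m. p i = 0) \<and> eucl_norm m (\<lambda>i. p i - snd f i) < fst f}"

definition eta :: "nat \<Rightarrow> point \<Rightarrow> point \<Rightarrow> real" where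
  "eta n u v = - (u 0 * v 0) + (\<Sum>i\<in>{1..<n}. u i * v i)"

definition causal_curve :: "nat \<Rightarrow> (real \<Rightarrow> point) \<Rightarrow> bool" where
  "causal_curve n \<gamma> \<longleftrightarrow>
     (\<forall>s\<in>{0..1}. \<forall>i\<ge>n. \<gamma> s i = 0) \<and>
     (\<exists>\<gamma>'. (\<forall>s\<in>{0..1}. \<forall>i<n.
                ((\<lambda>u. \<gamma> u i) has_vector_derivative \<gamma>' s i) (at s within {0..1})) \<and>
           (\<forall>s\<in>{0..1}. eta n (\<gamma>' s) (\<gamma>' s) \<le> 0) \<and>
           ((\<forall>s\<in>{0..1}. 0 \<le> \<gamma>' s 0) \<or> (\<forall>s\<in>{0..1}. \<gamma>' s 0 \<le> 0)))"

definition causally_disjoint :: "nat \<Rightarrow> point set \<Rightarrow> point set \<Rightarrow> bool" where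
  "causally_disjoint n S T \<longleftrightarrow> \<not> (\<exists>\<gamma>. causal_curve n \<gamma> \<and> \<gamma> 0 \<in> S \<and> \<gamma> 1 \<in> T)"

definition CD_perp :: "nat \<Rightarrow> emb \<Rightarrow> emb \<Rightarrow> bool" where
  "CD_perp n f g \<longleftrightarrow> causally_disjoint n (disc_img n f) (disc_img n g)"

definition Disc_perp :: "nat \<Rightarrow> emb \<Rightarrow> emb \<Rightarrow> bool" where
  "Disc_perp m f g \<longleftrightarrow> disc_int m f \<inter> disc_int m g = {}"

definition op_space :: "emb set \<Rightarrow> (emb \<Rightarrow> emb \<Rightarrow> bool) \<Rightarrow> nat \<Rightarrow> tup set" where
  "op_space H perp k = {fs. (\<forall>i<k. fs i \<in> H) \<and> (\<forall>i\<ge>k. fs i = eid) \<and>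
                            (\<forall>i<k. \<forall>j<k. i \<noteq> j \<longrightarrow> perp (fs i) (fs j))}"

(* topology of P(k): subspace of the product of copies of Hom (compact-open =
   topology of the parameters (r,b)) *)
definition op_top :: "emb set \<Rightarrow> (emb \<Rightarrow> emb \<Rightarrow> bool) \<Rightarrow> nat \<Rightarrow> tup topology" where
  "op_top H perp k = subtopology euclidean (op_space H perp k)"

(* partial composition  f o_i g  for f of arity k, g of arity j, i < k (0-based) *)
definition pcomp :: "nat \<Rightarrow> nat \<Rightarrow> tup \<Rightarrow> nat \<Rightarrow> tup \<Rightarrow> tup" where
  "pcomp k i f j g = (\<lambda>l. if l < i then f l
                         else if l < i + j then ecomp (f i) (g (l - i))
                         else if l < k + j - 1 then f (l + 1 - j)
                         else eid)"

definition sact :: "nat \<Rightarrow> (nat \<Rightarrow> nat) \<Rightarrow> tup \<Rightarrow> tup" where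
  "sact k \<sigma> f = (\<lambda>l. if l < k then f (\<sigma> l) else eid)"

definition operad_morphism ::
  "emb set \<Rightarrow> (emb \<Rightarrow> emb \<Rightarrow> bool) \<Rightarrow> emb set \<Rightarrow> (emb \<Rightarrow> emb \<Rightarrow> bool) \<Rightarrow> (nat \<Rightarrow> tup \<Rightarrow> tup) \<Rightarrow> bool" where
  "operad_morphism H1 p1 H2 p2 F \<longleftrightarrow>
     (\<forall>k. continuous_map (op_top H1 p1 k) (op_top H2 p2 k) (F k)) \<and>
     F 1 (\<lambda>_. eid) = (\<lambda>_. eid) \<and>
     (\<forall>k i j f g. i < k \<longrightarrow> f \<in> op_space H1 p1 k \<longrightarrow> g \<in> op_space H1 p1 j \<longrightarrow>
         F (k + j - 1) (pcomp k i f j g) = pcomp k i (F k f) j (F j g)) \<and>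
     (\<forall>k \<sigma> f. \<sigma> permutes {..<k} \<longrightarrow> f \<in> op_space H1 p1 k \<longrightarrow>
         F k (sact k \<sigma> f) = sact k \<sigma> (F k f))"

definition operad_hequiv_map ::
  "emb set \<Rightarrow> (emb \<Rightarrow> emb \<Rightarrow> bool) \<Rightarrow> emb set \<Rightarrow> (emb \<Rightarrow> emb \<Rightarrow> bool) \<Rightarrow> (nat \<Rightarrow> tup \<Rightarrow> tup) \<Rightarrow> bool" where
  "operad_hequiv_map H1 p1 H2 p2 F \<longleftrightarrow>
     operad_morphism H1 p1 H2 p2 F \<and>
     (\<forall>k. \<exists>G. continuous_map (op_top H2 p2 k) (op_top H1 p1 k) G \<and>
              homotopic_with (\<lambda>_. True) (op_top H1 p1 k) (op_top H1 p1 k) (G \<circ> F k) id \<and>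
              homotopic_with (\<lambda>_. True) (op_top H2 p2 k) (op_top H2 p2 k) (F k \<circ> G) id)"

definition operads_homotopy_equivalent ::
  "emb set \<Rightarrow> (emb \<Rightarrow> emb \<Rightarrow> bool) \<Rightarrow> emb set \<Rightarrow> (emb \<Rightarrow> emb \<Rightarrow> bool) \<Rightarrow> bool" where
  "operads_homotopy_equivalent H1 p1 H2 p2 \<longleftrightarrow>
     (\<exists>F. operad_hequiv_map H1 p1 H2 p2 F) \<or> (\<exists>F. operad_hequiv_map H2 p2 H1 p1 F)"

end

theory Submission
  imports Defs "HOL-Analysis.Analysis"
begin
lemma causal_bound:
  assumes "causal_curve n \<gamma>"
  shows "L2_set (\<lambda>i. \<gamma> 1 i - \<gamma> 0 i) {1..<n} \<le> \<bar>\<gamma> 1 0 - \<gamma> 0 0\<bar>"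
proof (cases "n = 0")
  case True then show ?thesis by simp
next
  case False
  then have n0: "0 < n" by simp
  from assms obtain \<gamma>' where
    dv: "\<forall>s\<in>{0..1}. \<forall>i<n. ((\<lambda>u. \<gamma> u i) has_vector_derivative \<gamma>' s i) (at s within {0..1})"
    and et: "\<forall>s\<in>{0..1}. eta n (\<gamma>' s) (\<gamma>' s) \<le> 0"
    and ori: "(\<forall>s\<in>{0..1}. 0 \<le> \<gamma>' s 0) \<or> (\<forall>s\<in>{0..1}. \<gamma>' s 0 \<le> 0)"
    unfolding causal_curve_def by blast
  obtain \<sigma> :: real where sg: "\<bar>\<sigma>\<bar> = 1" and sgp: "\<forall>s\<in>{0..1}. 0 \<le> \<sigma> * \<gamma>' s 0"
  proof (cases "\<forall>s\<in>{0..1}. 0 \<le> \<gamma>' s 0")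
    case True then show ?thesis using that[of 1] by simp
  next
    case False then show ?thesis using that[of "-1"] ori by auto
  qed
  define d where "d i = \<gamma> 1 i - \<gamma> 0 i" for i
  define N where "N = L2_set d {1..<n}"
  define \<psi> where "\<psi> s = \<sigma> * N * \<gamma> s 0 - (\<Sum>i\<in>{1..<n}. d i * \<gamma> s i)" for s
  define \<psi>' where "\<psi>' s = \<sigma> * N * \<gamma>' s 0 - (\<Sum>i\<in>{1..<n}. d i * \<gamma>' s i)" for s
  have dr: "(\<psi> has_real_derivative \<psi>' s) (at s within {0..1})" if s: "s \<in> {0..1}" for s
  proof -
    have c: "((\<lambda>u. \<gamma> u i) has_real_derivative \<gamma>' s i) (at s within {0..1})" if "i < n" for i
      using dv s that by (simp add: has_real_derivative_iff_has_vector_derivative)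
    have "((\<lambda>u. \<sigma> * N * \<gamma> u 0) has_real_derivative \<sigma> * N * \<gamma>' s 0) (at s within {0..1})"
      using c[OF n0] by (rule DERIV_cmult)
    moreover have "((\<lambda>u. \<Sum>i\<in>{1..<n}. d i * \<gamma> u i) has_real_derivative (\<Sum>i\<in>{1..<n}. d i * \<gamma>' s i)) (at s within {0..1})"
      by (rule DERIV_sum) (use c in \<open>auto intro: DERIV_cmult\<close>)
    ultimately show ?thesis unfolding \<psi>_def[abs_def] \<psi>'_def by (rule DERIV_diff)
  qed
  have L: "L2_set (\<gamma>' s) {1..<n} \<le> \<bar>\<gamma>' s 0\<bar>" if s: "s \<in> {0..1}" for s
  proof -
    have "(\<Sum>i\<in>{1..<n}. (\<gamma>' s i)\<^sup>2) \<le> (\<gamma>' s 0)\<^sup>2"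
      using et s unfolding eta_def by (simp add: power2_eq_square)
    then have "sqrt (\<Sum>i\<in>{1..<n}. (\<gamma>' s i)\<^sup>2) \<le> sqrt ((\<gamma>' s 0)\<^sup>2)"
      using real_sqrt_le_mono by blast
    then show ?thesis unfolding L2_set_def by simp
  qed
  have nn: "0 \<le> \<psi>' s" if s: "s \<in> {0..1}" for s
  proof -
    have "(\<Sum>i\<in>{1..<n}. d i * \<gamma>' s i) \<le> (\<Sum>i\<in>{1..<n}. \<bar>d i\<bar> * \<bar>\<gamma>' s i\<bar>)"
      by (rule sum_mono) (metis abs_ge_self abs_mult)
    also have "\<dots> \<le> N * L2_set (\<gamma>' s) {1..<n}"
      unfolding N_def by (rule L2_set_mult_ineq)
    also have "\<dots> \<le> N * \<bar>\<gamma>' s 0\<bar>"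
      using L[OF s] by (simp add: N_def mult_left_mono)
    also have "\<bar>\<gamma>' s 0\<bar> = \<sigma> * \<gamma>' s 0"
      using sg sgp s by (metis abs_mult abs_of_nonneg mult_1)
    finally show ?thesis unfolding \<psi>'_def by (simp add: mult.assoc mult.left_commute)
  qed
  have cont: "continuous_on {0..1} \<psi>"
    using dr by (meson DERIV_continuous continuous_on_eq_continuous_within)
  have mono: "\<psi> 0 \<le> \<psi> 1"
  proof (rule DERIV_nonneg_imp_increasing_open[OF _ _ cont])
    fix x :: real assume x: "0 < x" "x < 1"
    then have "(\<psi> has_real_derivative \<psi>' x) (at x)"
      using dr[of x] at_within_Icc_at[of 0 x 1] by simp
    then show "\<exists>y. (\<psi> has_real_derivative y) (at x) \<and> 0 \<le> y" using nn[of x] x by auto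
  qed simp
  have NN: "N\<^sup>2 = (\<Sum>i\<in>{1..<n}. d i * (\<gamma> 1 i - \<gamma> 0 i))"
    unfolding N_def L2_set_def d_def by (simp add: sum_nonneg power2_eq_square)
  have "\<psi> 1 - \<psi> 0 = \<sigma> * N * (\<gamma> 1 0 - \<gamma> 0 0) - (\<Sum>i\<in>{1..<n}. d i * (\<gamma> 1 i - \<gamma> 0 i))"
    unfolding \<psi>_def by (simp add: algebra_simps sum_subtractf)
  then have "N\<^sup>2 \<le> \<sigma> * N * (\<gamma> 1 0 - \<gamma> 0 0)" using mono NN by simp
  also have "\<dots> \<le> N * \<bar>\<gamma> 1 0 - \<gamma> 0 0\<bar>"
  proof -
    have "\<sigma> * (\<gamma> 1 0 - \<gamma> 0 0) \<le> \<bar>\<gamma> 1 0 - \<gamma> 0 0\<bar>"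
      using sg by (metis abs_ge_self abs_mult mult_1)
    moreover have "0 \<le> N" by (simp add: N_def)
    ultimately show ?thesis by (metis mult.assoc mult.commute mult_left_mono)
  qed
  finally have "N * N \<le> N * \<bar>\<gamma> 1 0 - \<gamma> 0 0\<bar>" by (simp add: power2_eq_square)
  then have "N \<le> \<bar>\<gamma> 1 0 - \<gamma> 0 0\<bar>"
    by (metis N_def L2_set_nonneg abs_ge_zero mult_le_cancel_left_pos order_le_less)
  then show ?thesis unfolding N_def d_def .
qed

lemma eucl_L2: "eucl_norm m v = L2_set v {..<m}"
  unfolding eucl_norm_def L2_set_def by simp

lemma L2_neg: "L2_set (\<lambda>i. - f i) A = L2_set f A"
  unfolding L2_set_def by simp

lemma L2_diff_sym: "L2_set (\<lambda>i. a i - b i) A = L2_set (\<lambda>i. b i - a i) A"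
  unfolding L2_set_def by (simp add: power2_commute)

lemma abs_le_L2: "finite A \<Longrightarrow> i \<in> A \<Longrightarrow> \<bar>f i\<bar> \<le> L2_set f A"
proof -
  assume "finite A" "i \<in> A"
  then have "\<bar>f i\<bar> \<le> L2_set (\<lambda>i. \<bar>f i\<bar>) A" by (rule member_le_L2_set)
  moreover have "L2_set (\<lambda>i. \<bar>f i\<bar>) A = L2_set f A" unfolding L2_set_def by simp
  ultimately show ?thesis by simp
qed

lemma L2_subset: "finite B \<Longrightarrow> A \<subseteq> B \<Longrightarrow> L2_set f A \<le> L2_set f B"
  unfolding L2_set_def by (intro real_sqrt_le_mono sum_mono2) auto

lemma L2_tri3: "L2_set (\<lambda>i. a i + b i - c i) A \<le> L2_set a A + L2_set b A + L2_set c A"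
proof -
  have "L2_set (\<lambda>i. a i + b i - c i) A \<le> L2_set (\<lambda>i. a i + b i) A + L2_set (\<lambda>i. - c i) A"
    using L2_set_triangle_ineq[of "\<lambda>i. a i + b i" "\<lambda>i. - c i" A] by simp
  also have "\<dots> \<le> L2_set a A + L2_set b A + L2_set c A"
    using L2_set_triangle_ineq[of a b A] by (simp add: L2_neg)
  finally show ?thesis .
qed

definition sep :: "nat \<Rightarrow> point set \<Rightarrow> point set \<Rightarrow> bool" where
  "sep n A B \<longleftrightarrow> (\<forall>p\<in>A. \<forall>q\<in>B. \<bar>q 0 - p 0\<bar> < L2_set (\<lambda>i. q i - p i) {1..<n})"

lemma sep_cd: "sep n A B \<Longrightarrow> causally_disjoint n A B"
  unfolding sep_def causally_disjoint_def using causal_bound by fastforce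

lemma line_causal:
  assumes "\<forall>i\<ge>n. p i = 0" "\<forall>i\<ge>n. q i = 0"
    and le: "L2_set (\<lambda>i. q i - p i) {1..<n} \<le> \<bar>q 0 - p 0\<bar>"
  shows "causal_curve n (\<lambda>s i. p i + s * (q i - p i))"
  unfolding causal_curve_def
proof (intro conjI)
  show "\<forall>s\<in>{0..1}. \<forall>i\<ge>n. p i + s * (q i - p i) = 0" using assms by simp
  have sq: "(\<Sum>i\<in>{1..<n}. (q i - p i) * (q i - p i)) \<le> (q 0 - p 0) * (q 0 - p 0)"
  proof -
    have "(\<Sum>i\<in>{1..<n}. (q i - p i)\<^sup>2) = (L2_set (\<lambda>i. q i - p i) {1..<n})\<^sup>2"
      unfolding L2_set_def by (simp add: sum_nonneg)
    also have "\<dots> \<le> \<bar>q 0 - p 0\<bar>\<^sup>2" using le by (metis L2_set_nonneg power_mono)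
    finally show ?thesis by (simp add: power2_eq_square)
  qed
  show "\<exists>\<gamma>'. (\<forall>s\<in>{0..1}. \<forall>i<n. ((\<lambda>u. p i + u * (q i - p i)) has_vector_derivative \<gamma>' s i) (at s within {0..1})) \<and>
          (\<forall>s\<in>{0..1}. eta n (\<gamma>' s) (\<gamma>' s) \<le> 0) \<and>
          ((\<forall>s\<in>{0..1}. 0 \<le> \<gamma>' s 0) \<or> (\<forall>s\<in>{0..1}. \<gamma>' s 0 \<le> 0))"
  proof (intro exI[of _ "\<lambda>s i. q i - p i"] conjI ballI allI impI)
    fix s :: real and i
    show "((\<lambda>u. p i + u * (q i - p i)) has_vector_derivative q i - p i) (at s within {0..1})"
      unfolding has_real_derivative_iff_has_vector_derivative[symmetric]
      by (auto intro!: derivative_eq_intros)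
  next
    fix s :: real
    show "eta n (\<lambda>i. q i - p i) (\<lambda>i. q i - p i) \<le> 0" using sq unfolding eta_def by simp
  next
    show "(\<forall>s\<in>{0..1}. 0 \<le> q 0 - p 0) \<or> (\<forall>s\<in>{0..1::real}. q 0 - p 0 \<le> 0)" by auto
  qed
qed

lemma cd_sep:
  assumes "causally_disjoint n A B" "\<forall>p\<in>A. \<forall>i\<ge>n. p i = 0" "\<forall>p\<in>B. \<forall>i\<ge>n. p i = 0"
  shows "sep n A B"
  unfolding sep_def
proof (intro ballI, rule ccontr)
  fix p q assume pq: "p \<in> A" "q \<in> B" and "\<not> \<bar>q 0 - p 0\<bar> < L2_set (\<lambda>i. q i - p i) {1..<n}"
  then have le: "L2_set (\<lambda>i. q i - p i) {1..<n} \<le> \<bar>q 0 - p 0\<bar>" by simp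
  have "causal_curve n (\<lambda>s i. p i + s * (q i - p i))"
    using line_causal[OF _ _ le] assms pq by auto
  moreover have "(\<lambda>i. p i + 0 * (q i - p i)) = p" "(\<lambda>i. p i + 1 * (q i - p i)) = q" by auto
  ultimately show False using assms(1) pq unfolding causally_disjoint_def by metis
qed

lemma disc_mem: "p \<in> disc_img n (r, c) \<longleftrightarrow> (\<forall>i\<ge>n. p i = 0) \<and> L2_set (\<lambda>i. p i - c i) {..<n} \<le> r"
  unfolding disc_img_def eucl_L2 by simp

lemma disc_zero: "p \<in> disc_img n e \<Longrightarrow> n \<le> i \<Longrightarrow> p i = 0"
  unfolding disc_img_def by simp

lemma D1:
  assumes n: "0 < n" and cd: "CD_perp n (r1, c1) (r2, c2)" and r: "0 \<le> r1" "0 \<le> r2"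
    and z: "\<forall>i\<ge>n. c1 i = 0" "\<forall>i\<ge>n. c2 i = 0"
  shows "\<bar>c2 0 - c1 0\<bar> + r1 + r2 < L2_set (\<lambda>i. c2 i - c1 i) {1..<n}"
proof -
  have sp: "sep n (disc_img n (r1, c1)) (disc_img n (r2, c2))"
    using cd unfolding CD_perp_def by (rule cd_sep) (blast dest: disc_zero)+
  obtain \<sigma> :: real where s1: "\<sigma> = 1 \<or> \<sigma> = -1" and s2: "\<sigma> * (c2 0 - c1 0) = \<bar>c2 0 - c1 0\<bar>"
  proof (cases "c1 0 \<le> c2 0")
    case True then show ?thesis by (intro that[of 1]) auto
  next
    case False then show ?thesis by (intro that[of "-1"]) auto
  qed
  define p where "p = c1(0 := c1 0 - \<sigma> * r1)"
  define q where "q = c2(0 := c2 0 + \<sigma> * r2)"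
  have L0: "L2_set (\<lambda>i. if i = 0 then x else 0) {..<n} = \<bar>x\<bar>" for x :: real
  proof -
    have e: "{..<n} = insert 0 {1..<n}" using n by auto
    show ?thesis unfolding e by (subst L2_set_insert) (auto simp: L2_set_0')
  qed
  have sabs: "\<bar>\<sigma> * x\<bar> = \<bar>x\<bar>" for x
    using s1 by auto
  have "p \<in> disc_img n (r1, c1)"
  proof -
    have "(\<lambda>i. p i - c1 i) = (\<lambda>i. if i = 0 then - \<sigma> * r1 else 0)" by (auto simp: p_def)
    moreover have "\<bar>- \<sigma> * r1\<bar> = r1" using s1 r by auto
    moreover have "\<forall>i\<ge>n. p i = 0" using z n by (auto simp: p_def)
    ultimately show ?thesis by (simp add: disc_mem L0)
  qed
  moreover have "q \<in> disc_img n (r2, c2)"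
  proof -
    have "(\<lambda>i. q i - c2 i) = (\<lambda>i. if i = 0 then \<sigma> * r2 else 0)" by (auto simp: q_def)
    moreover have "\<bar>\<sigma> * r2\<bar> = r2" using sabs r by simp
    moreover have "\<forall>i\<ge>n. q i = 0" using z n by (auto simp: q_def)
    ultimately show ?thesis by (simp add: disc_mem L0)
  qed
  ultimately have lt: "\<bar>q 0 - p 0\<bar> < L2_set (\<lambda>i. q i - p i) {1..<n}"
    using sp unfolding sep_def by blast
  have "L2_set (\<lambda>i. q i - p i) {1..<n} = L2_set (\<lambda>i. c2 i - c1 i) {1..<n}"
    by (rule L2_set_cong) (auto simp: p_def q_def)
  moreover have "\<bar>q 0 - p 0\<bar> = \<bar>c2 0 - c1 0\<bar> + r1 + r2"
  proof -
    have e: "q 0 - p 0 = (c2 0 - c1 0) + \<sigma> * (r1 + r2)" by (simp add: p_def q_def algebra_simps)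
    show ?thesis using s1
    proof
      assume a: "\<sigma> = 1"
      then have "0 \<le> c2 0 - c1 0" using s2 by (metis abs_ge_zero mult_1)
      then show ?thesis using r unfolding e a by simp
    next
      assume a: "\<sigma> = -1"
      then have "c2 0 - c1 0 \<le> 0" using s2 by (metis abs_ge_zero mult_minus1 neg_0_le_iff_le)
      then show ?thesis using r unfolding e a by simp
    qed
  qed
  ultimately show ?thesis using lt by simp
qed

lemma D2:
  assumes lt: "\<bar>c2 0 - c1 0\<bar> + 2 * (a1 + a2) < L2_set (\<lambda>i. c2 i - c1 i) {1..<n}"
  shows "CD_perp n (a1, c1) (a2, c2)"
  unfolding CD_perp_def
proof (rule sep_cd, unfold sep_def, intro ballI)
  fix p q assume p: "p \<in> disc_img n (a1, c1)" and q: "q \<in> disc_img n (a2, c2)"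
  define u where "u = (\<lambda>i. p i - c1 i)"
  define v where "v = (\<lambda>i. q i - c2 i)"
  have u: "L2_set u {..<n} \<le> a1" using p by (simp add: disc_mem u_def)
  have v: "L2_set v {..<n} \<le> a2" using q by (simp add: disc_mem v_def)
  have a0: "0 \<le> a1" "0 \<le> a2" using u v by (metis L2_set_nonneg order_trans)+
  show "\<bar>q 0 - p 0\<bar> < L2_set (\<lambda>i. q i - p i) {1..<n}"
  proof (cases "0 < n")
    case False
    then show ?thesis using lt a0 by (simp add: L2_set_def)
  next
    case True
    have u0: "\<bar>u 0\<bar> \<le> a1" using abs_le_L2[of "{..<n}" 0 u] True u by simp
    have v0: "\<bar>v 0\<bar> \<le> a2" using abs_le_L2[of "{..<n}" 0 v] True v by simp
    have u1: "L2_set u {1..<n} \<le> a1" using L2_subset[of "{..<n}" "{1..<n}" u] u by force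
    have v1: "L2_set v {1..<n} \<le> a2" using L2_subset[of "{..<n}" "{1..<n}" v] v by force
    have "L2_set (\<lambda>i. c2 i - c1 i) {1..<n} = L2_set (\<lambda>i. (q i - p i) + u i - v i) {1..<n}"
      by (rule L2_set_cong) (auto simp: u_def v_def)
    also have "\<dots> \<le> L2_set (\<lambda>i. q i - p i) {1..<n} + L2_set u {1..<n} + L2_set v {1..<n}"
      by (rule L2_tri3)
    finally have f1: "L2_set (\<lambda>i. c2 i - c1 i) {1..<n} \<le> L2_set (\<lambda>i. q i - p i) {1..<n} + (a1 + a2)"
      using u1 v1 by simp
    have f2: "\<bar>q 0 - p 0\<bar> \<le> \<bar>c2 0 - c1 0\<bar> + (a1 + a2)"
    proof -
      have "q 0 - p 0 = (c2 0 - c1 0) + (v 0 - u 0)" by (simp add: u_def v_def)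
      then have "\<bar>q 0 - p 0\<bar> \<le> \<bar>c2 0 - c1 0\<bar> + \<bar>v 0 - u 0\<bar>" by (metis abs_triangle_ineq)
      moreover have "\<bar>v 0 - u 0\<bar> \<le> \<bar>v 0\<bar> + \<bar>u 0\<bar>" by (rule abs_triangle_ineq4)
      ultimately show ?thesis using u0 v0 by linarith
    qed
    have key: "\<And>(A::real) (C::real) (L::real) (M::real) (s::real). L \<le> M + s \<Longrightarrow> A \<le> C + s \<Longrightarrow> C + 2 * s < L \<Longrightarrow> A < M"
      by linarith
    show ?thesis by (rule key[OF f1 f2 lt])
  qed
qed

lemma cd_mono:
  assumes "CD_perp n (r1, c1) (r2, c2)" "a1 \<le> r1" "a2 \<le> r2"
  shows "CD_perp n (a1, c1) (a2, c2)"
proof -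
  have "disc_img n (a1, c1) \<subseteq> disc_img n (r1, c1)" "disc_img n (a2, c2) \<subseteq> disc_img n (r2, c2)"
    using assms(2,3) by (auto simp: disc_mem)
  then show ?thesis using assms(1) unfolding CD_perp_def causally_disjoint_def by blast
qed

lemma dint_mem: "p \<in> disc_int m (r, c) \<longleftrightarrow> (\<forall>i\<ge>m. p i = 0) \<and> L2_set (\<lambda>i. p i - c i) {..<m} < r"
  unfolding disc_int_def eucl_L2 by simp

lemma E1:
  assumes dp: "Disc_perp m (r1, x1) (r2, x2)" and r: "0 < r1" "0 < r2"
    and z: "\<forall>i\<ge>m. x1 i = 0" "\<forall>i\<ge>m. x2 i = 0"
  shows "r1 + r2 \<le> L2_set (\<lambda>i. x2 i - x1 i) {..<m}"
proof (rule ccontr)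
  define D where "D = L2_set (\<lambda>i. x2 i - x1 i) {..<m}"
  define R where "R = r1 + r2"
  assume "\<not> r1 + r2 \<le> L2_set (\<lambda>i. x2 i - x1 i) {..<m}"
  then have DR: "D < R" by (simp add: D_def R_def)
  have R0: "0 < R" using r by (simp add: R_def)
  define w where "w i = x1 i + (r1 / R) * (x2 i - x1 i)" for i
  have "L2_set (\<lambda>i. w i - x1 i) {..<m} = (r1 / R) * D"
    unfolding D_def w_def using r R0 by (subst L2_set_right_distrib) auto
  also have "\<dots> < r1" using DR R0 r by (simp add: field_simps)
  finally have w1: "w \<in> disc_int m (r1, x1)" using z by (simp add: dint_mem w_def)
  have q: "1 - r1 / R = r2 / R" using R0 by (simp add: R_def field_simps)
  have "w i - x2 i = (1 - r1 / R) * (x1 i - x2 i)" for i by (simp add: w_def algebra_simps)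
  then have "L2_set (\<lambda>i. w i - x2 i) {..<m} = L2_set (\<lambda>i. (r2 / R) * (x1 i - x2 i)) {..<m}"
    unfolding q by simp
  also have "\<dots> = (r2 / R) * D"
    unfolding D_def using r R0 by (subst L2_set_right_distrib[symmetric]) (use L2_diff_sym[of x1 x2] in auto)
  also have "\<dots> < r2" using DR R0 r by (simp add: field_simps)
  finally have w2: "w \<in> disc_int m (r2, x2)" using z by (simp add: dint_mem w_def)
  show False using w1 w2 dp unfolding Disc_perp_def by blast
qed

lemma E2:
  assumes "r1 + r2 \<le> L2_set (\<lambda>i. x2 i - x1 i) {..<m}"
  shows "Disc_perp m (r1, x1) (r2, x2)"
  unfolding Disc_perp_def
proof (rule ccontr)
  assume "disc_int m (r1, x1) \<inter> disc_int m (r2, x2) \<noteq> {}"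
  then obtain w where w1: "L2_set (\<lambda>i. w i - x1 i) {..<m} < r1" and w2: "L2_set (\<lambda>i. w i - x2 i) {..<m} < r2"
    by (auto simp: dint_mem)
  have "L2_set (\<lambda>i. x2 i - x1 i) {..<m} = L2_set (\<lambda>i. (w i - x1 i) + 0 - (w i - x2 i)) {..<m}"
    by (rule L2_set_cong) auto
  also have "\<dots> \<le> L2_set (\<lambda>i. w i - x1 i) {..<m} + L2_set (\<lambda>i. 0) {..<m} + L2_set (\<lambda>i. w i - x2 i) {..<m}"
    by (rule L2_tri3)
  finally show False using w1 w2 assms by (simp add: L2_set_0')
qed

lemma disc_mono:
  assumes "Disc_perp m (r1, c1) (r2, c2)" "a1 \<le> r1" "a2 \<le> r2"
  shows "Disc_perp m (a1, c1) (a2, c2)"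
proof -
  have "disc_int m (a1, c1) \<subseteq> disc_int m (r1, c1)" "disc_int m (a2, c2) \<subseteq> disc_int m (r2, c2)"
    using assms(2,3) by (auto simp: dint_mem)
  then show ?thesis using assms(1) unfolding Disc_perp_def by blast
qed

lemma L2_shift: "L2_set (\<lambda>i. f (Suc i)) {..<m} = L2_set f {1..<Suc m}"
proof -
  have "(\<Sum>i\<in>{1..<Suc m}. (f i)\<^sup>2) = (\<Sum>i\<in>{0..<m}. (f (Suc i))\<^sup>2)"
    using sum.shift_bounds_Suc_ivl[of "\<lambda>i. (f i)\<^sup>2" 0 m] by simp
  then show ?thesis unfolding L2_set_def lessThan_atLeast0 by simp
qed

lemma L2_split: "L2_set f {..<Suc m} = sqrt ((f 0)\<^sup>2 + (L2_set f {1..<Suc m})\<^sup>2)"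
proof -
  have e: "{..<Suc m} = insert 0 {1..<Suc m}" by auto
  show ?thesis unfolding e by (subst L2_set_insert) auto
qed

definition Pm :: "emb \<Rightarrow> emb" where "Pm e = (fst e, \<lambda>i. snd e (Suc i))"
definition Qm :: "emb \<Rightarrow> emb" where "Qm e = (fst e / 4, \<lambda>i. if i = 0 then 0 else snd e (i - 1))"
definition S1 :: "real \<Rightarrow> emb \<Rightarrow> emb" where "S1 s e = ((1/4 + 3 * s / 4) * fst e, snd e)"
definition S2 :: "real \<Rightarrow> emb \<Rightarrow> emb" where
  "S2 s e = (fst e / 4, \<lambda>i. if i = 0 then s * snd e 0 else snd e i)"

lemma Qm_pair: "Qm (r, b) = (r / 4, \<lambda>i. if i = 0 then 0 else b (i - 1))"
  by (simp add: Qm_def cong: if_cong)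
lemma S2_pair: "S2 s (r, b) = (r / 4, \<lambda>i. if i = 0 then s * b 0 else b i)"
  by (simp add: S2_def cong: if_cong)

lemma Pm_eid: "Pm eid = eid" by (simp add: Pm_def eid_def)
lemma Pm_ecomp: "Pm (ecomp f g) = ecomp (Pm f) (Pm g)" by (simp add: Pm_def ecomp_def)
lemma PQ: "Pm (Qm e) = S1 0 e" by (simp add: Pm_def Qm_def S1_def)
lemma QP: "Qm (Pm e) = S2 0 e" by (auto simp: Pm_def Qm_def S2_def fun_eq_iff)
lemma S21: "S2 1 e = S1 0 e" by (auto simp: S1_def S2_def fun_eq_iff)
lemma S11: "S1 1 e = e" by (simp add: S1_def)

lemma rect_mem: "(r, b) \<in> rect m \<longleftrightarrow> 0 < r \<and> (\<forall>i\<ge>m. b i = 0) \<and> r + L2_set b {..<m} \<le> 1"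
  unfolding rect_def eucl_L2 by simp

lemma Pm_rect: assumes "e \<in> rect (Suc m)" shows "Pm e \<in> rect m"
proof -
  obtain r b where e: "e = (r, b)" by fastforce
  have "L2_set b {1..<Suc m} \<le> L2_set b {..<Suc m}" by (rule L2_subset) auto
  then show ?thesis using assms unfolding e Pm_def by (auto simp: rect_mem L2_shift)
qed

lemma Qm_rect: assumes "e \<in> rect m" shows "Qm e \<in> rect (Suc m)"
proof -
  obtain r b where e: "e = (r, b)" by fastforce
  let ?c = "\<lambda>i. if i = 0 then 0 else b (i - 1)"
  have "L2_set ?c {..<Suc m} = L2_set (\<lambda>i. ?c (Suc i)) {..<m}"
    unfolding L2_split L2_shift[symmetric] by simp
  also have "\<dots> = L2_set b {..<m}" by simp
  finally have "L2_set ?c {..<Suc m} = L2_set b {..<m}" .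
  moreover have "\<forall>i\<ge>Suc m. ?c i = 0" using assms unfolding e by (auto simp: rect_mem)
  moreover have "Qm e = (r / 4, ?c)" by (simp add: Qm_pair e)
  ultimately show ?thesis using assms unfolding e by (auto simp: rect_mem)
qed

lemma S1_rect: assumes "e \<in> rect m" "s \<in> {0..1}" shows "S1 s e \<in> rect m"
proof -
  obtain r b where e: "e = (r, b)" by fastforce
  have "(1/4 + 3 * s / 4) * r \<le> r" "0 < (1/4 + 3 * s / 4) * r" using assms unfolding e
    by (auto simp: rect_mem mult_le_cancel_right1)
  then show ?thesis using assms unfolding e S1_def by (auto simp: rect_mem)
qed

lemma S2_rect: assumes "e \<in> rect (Suc m)" "s \<in> {0..1}" shows "S2 s e \<in> rect (Suc m)"
proof -
  obtain r b where e: "e = (r, b)" by fastforce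
  let ?c = "\<lambda>i. if i = 0 then s * b 0 else b i"
  have "(s * b 0)\<^sup>2 \<le> (b 0)\<^sup>2"
  proof -
    have "s\<^sup>2 \<le> 1" using assms(2) by (simp add: power_le_one)
    then have "s\<^sup>2 * (b 0)\<^sup>2 \<le> 1 * (b 0)\<^sup>2" by (rule mult_right_mono) simp
    then show ?thesis by (simp add: power_mult_distrib)
  qed
  moreover have "L2_set ?c {1..<Suc m} = L2_set b {1..<Suc m}" by (rule L2_set_cong) auto
  ultimately have "L2_set ?c {..<Suc m} \<le> L2_set b {..<Suc m}"
    unfolding L2_split by (intro real_sqrt_le_mono) simp
  then show ?thesis using assms unfolding e S2_pair by (auto simp: rect_mem)
qed

lemma Pm_perp:
  assumes "e1 \<in> rect (Suc m)" "e2 \<in> rect (Suc m)" "CD_perp (Suc m) e1 e2"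
  shows "Disc_perp m (Pm e1) (Pm e2)"
proof -
  obtain r1 c1 where e1: "e1 = (r1, c1)" by fastforce
  obtain r2 c2 where e2: "e2 = (r2, c2)" by fastforce
  have "\<bar>c2 0 - c1 0\<bar> + r1 + r2 < L2_set (\<lambda>i. c2 i - c1 i) {1..<Suc m}"
    using assms by (intro D1) (auto simp: e1 e2 rect_mem)
  then have "r1 + r2 \<le> L2_set (\<lambda>i. c2 (Suc i) - c1 (Suc i)) {..<m}"
    unfolding L2_shift[of "\<lambda>i. c2 i - c1 i"] by simp
  then show ?thesis unfolding e1 e2 Pm_def by (simp add: E2)
qed

lemma Qm_perp:
  assumes "e1 \<in> rect m" "e2 \<in> rect m" "Disc_perp m e1 e2"
  shows "CD_perp (Suc m) (Qm e1) (Qm e2)"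
proof -
  obtain r1 c1 where e1: "e1 = (r1, c1)" by fastforce
  obtain r2 c2 where e2: "e2 = (r2, c2)" by fastforce
  have R: "r1 + r2 \<le> L2_set (\<lambda>i. c2 i - c1 i) {..<m}" "0 < r1" "0 < r2"
    using assms by (auto simp: e1 e2 rect_mem intro!: E1)
  let ?d = "\<lambda>i. (if i = 0 then 0 else c2 (i - 1)) - (if i = 0 then 0 else c1 (i - 1))"
  have "L2_set ?d {1..<Suc m} = L2_set (\<lambda>i. c2 i - c1 i) {..<m}"
    unfolding L2_shift[symmetric] by simp
  moreover have "?d 0 = 0" by simp
  moreover have "\<And>(a::real) L. a = 0 \<Longrightarrow> r1 + r2 \<le> L \<Longrightarrow> \<bar>a\<bar> + 2 * (r1 / 4 + r2 / 4) < L"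
    using R(2,3) by simp
  ultimately have "\<bar>?d 0\<bar> + 2 * (r1 / 4 + r2 / 4) < L2_set ?d {1..<Suc m}" using R(1) by metis
  then show ?thesis unfolding e1 e2 Qm_pair by (rule D2)
qed

lemma S1_perp_CD:
  assumes "e1 \<in> rect n" "e2 \<in> rect n" "CD_perp n e1 e2" "s \<in> {0..1}"
  shows "CD_perp n (S1 s e1) (S1 s e2)"
proof -
  obtain r1 c1 where e1: "e1 = (r1, c1)" by fastforce
  obtain r2 c2 where e2: "e2 = (r2, c2)" by fastforce
  have r: "0 < r1" "0 < r2" using assms by (auto simp: e1 e2 rect_mem)
  have f: "0 \<le> 1/4 + 3 * s / 4" "1/4 + 3 * s / 4 \<le> 1" using assms(4) by auto
  have "(1/4 + 3 * s / 4) * r1 \<le> r1" "(1/4 + 3 * s / 4) * r2 \<le> r2"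
    using f r by (simp_all add: mult_left_le_one_le)
  then show ?thesis using assms(3) unfolding e1 e2 S1_def by (simp add: cd_mono)
qed

lemma S1_perp_Disc:
  assumes "e1 \<in> rect n" "e2 \<in> rect n" "Disc_perp n e1 e2" "s \<in> {0..1}"
  shows "Disc_perp n (S1 s e1) (S1 s e2)"
proof -
  obtain r1 c1 where e1: "e1 = (r1, c1)" by fastforce
  obtain r2 c2 where e2: "e2 = (r2, c2)" by fastforce
  have r: "0 < r1" "0 < r2" using assms by (auto simp: e1 e2 rect_mem)
  have f: "0 \<le> 1/4 + 3 * s / 4" "1/4 + 3 * s / 4 \<le> 1" using assms(4) by auto
  have "(1/4 + 3 * s / 4) * r1 \<le> r1" "(1/4 + 3 * s / 4) * r2 \<le> r2"
    using f r by (simp_all add: mult_left_le_one_le)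
  then show ?thesis using assms(3) unfolding e1 e2 S1_def by (simp add: disc_mono)
qed

lemma S2_perp:
  assumes "e1 \<in> rect (Suc m)" "e2 \<in> rect (Suc m)" "CD_perp (Suc m) e1 e2" "s \<in> {0..1}"
  shows "CD_perp (Suc m) (S2 s e1) (S2 s e2)"
proof -
  obtain r1 c1 where e1: "e1 = (r1, c1)" by fastforce
  obtain r2 c2 where e2: "e2 = (r2, c2)" by fastforce
  have r: "0 < r1" "0 < r2" using assms by (auto simp: e1 e2 rect_mem)
  have lt: "\<bar>c2 0 - c1 0\<bar> + r1 + r2 < L2_set (\<lambda>i. c2 i - c1 i) {1..<Suc m}"
    using assms r by (intro D1) (auto simp: e1 e2 rect_mem)
  let ?d = "\<lambda>i. (if i = 0 then s * c2 0 else c2 i) - (if i = 0 then s * c1 0 else c1 i)"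
  have "L2_set ?d {1..<Suc m} = L2_set (\<lambda>i. c2 i - c1 i) {1..<Suc m}"
    by (rule L2_set_cong) auto
  moreover have "\<bar>?d 0\<bar> \<le> \<bar>c2 0 - c1 0\<bar>"
  proof -
    have "\<bar>?d 0\<bar> = s * \<bar>c2 0 - c1 0\<bar>" using assms(4) by (simp add: abs_mult right_diff_distrib[symmetric])
    then show ?thesis using assms(4) by (simp add: mult_left_le_one_le)
  qed
  ultimately have "\<bar>?d 0\<bar> + 2 * (r1 / 4 + r2 / 4) < L2_set ?d {1..<Suc m}" using lt r by simp
  then show ?thesis unfolding e1 e2 S2_pair by (rule D2)
qed

lemma op_map:
  assumes "\<forall>e\<in>H1. T e \<in> H2" "\<forall>e1\<in>H1. \<forall>e2\<in>H1. p1 e1 e2 \<longrightarrow> p2 (T e1) (T e2)" "fs \<in> op_space H1 p1 k"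
  shows "(\<lambda>l. if l < k then T (fs l) else eid) \<in> op_space H2 p2 k"
  using assms unfolding op_space_def by auto

lemma cont_coord: "continuous_on S g \<Longrightarrow> continuous_on S (\<lambda>x. g x i)"
  by (rule continuous_on_product_then_coordinatewise)

lemma cont_tup:
  assumes "continuous_on UNIV T"
  shows "continuous_on UNIV (\<lambda>fs::tup. \<lambda>l. if l < k then T (fs l) else eid)"
proof (intro continuous_on_coordinatewise_then_product)
  fix l
  show "continuous_on UNIV (\<lambda>fs::tup. if l < k then T (fs l) else eid)"
  proof (cases "l < k")
    case True
    have "continuous_on UNIV (\<lambda>fs::tup. T (fs l))"
      by (rule continuous_on_compose2[OF assms continuous_on_product_coordinates]) auto
    then show ?thesis using True by simp
  qed simp
qed

lemma cont_tup0:
  assumes "continuous_on UNIV T"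
  shows "continuous_on UNIV (\<lambda>fs::tup. \<lambda>l. T (fs l))"
proof (intro continuous_on_coordinatewise_then_product)
  fix l
  show "continuous_on UNIV (\<lambda>fs::tup. T (fs l))"
    by (rule continuous_on_compose2[OF assms continuous_on_product_coordinates]) auto
qed

lemma cont_tup2:
  assumes "continuous_on UNIV (\<lambda>x::real \<times> emb. E (fst x) (snd x))"
  shows "continuous_on UNIV (\<lambda>x::real \<times> tup. \<lambda>l. if l < k then E (fst x) (snd x l) else eid)"
proof (intro continuous_on_coordinatewise_then_product)
  fix l
  show "continuous_on UNIV (\<lambda>x::real \<times> tup. if l < k then E (fst x) (snd x l) else eid)"
  proof (cases "l < k")
    case True
    have c: "continuous_on UNIV (\<lambda>x::real \<times> tup. (fst x, snd x l))"
      by (intro continuous_intros cont_coord)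
    have "continuous_on UNIV (\<lambda>x::real \<times> tup. E (fst x) (snd x l))"
      using continuous_on_compose2[OF assms c] by auto
    then show ?thesis using True by simp
  qed simp
qed

lemma cc: "continuous_on S f \<Longrightarrow> continuous_on S (\<lambda>x. snd (f x) i)"
  for f :: "'a::topological_space \<Rightarrow> 'b::topological_space \<times> (nat \<Rightarrow> real)"
  by (rule cont_coord) (rule continuous_on_snd)

lemma cont_Pm: "continuous_on UNIV Pm"
proof -
  have "continuous_on UNIV (\<lambda>e::emb. \<lambda>i. snd e (Suc i))"
    by (rule continuous_on_coordinatewise_then_product) (rule cc[OF continuous_on_id])
  then have "continuous_on UNIV (\<lambda>e::emb. (fst e, \<lambda>i. snd e (Suc i)))"
    by (intro continuous_on_Pair continuous_on_fst continuous_on_id)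
  then show ?thesis unfolding Pm_def[abs_def] .
qed

lemma cont_Qm: "continuous_on UNIV Qm"
proof -
  have A: "continuous_on UNIV (\<lambda>e::emb. \<lambda>i. if i = 0 then 0 else snd e (i - 1))"
  proof (rule continuous_on_coordinatewise_then_product)
    fix i show "continuous_on UNIV (\<lambda>e::emb. if i = 0 then 0 else snd e (i - 1))"
      by (cases "i = 0") (simp_all add: cc[OF continuous_on_id])
  qed
  have B: "continuous_on UNIV (\<lambda>e::emb. fst e / 4)"
    by (intro continuous_on_divide continuous_on_fst continuous_on_id continuous_on_const) auto
  have "continuous_on UNIV (\<lambda>e::emb. (fst e / 4, \<lambda>i. if i = 0 then 0 else snd e (i - 1)))"
    by (rule continuous_on_Pair[OF B A])
  then show ?thesis unfolding Qm_def[abs_def] .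
qed

lemma cont_S1: "continuous_on UNIV (\<lambda>x::real \<times> emb. S1 (fst x) (snd x))"
proof -
  have "continuous_on UNIV (\<lambda>x::real \<times> emb. ((1/4 + 3 * fst x / 4) * fst (snd x), snd (snd x)))"
    by (intro continuous_on_Pair continuous_on_mult continuous_on_add continuous_on_divide
        continuous_on_fst continuous_on_snd continuous_on_id continuous_on_const) auto
  then show ?thesis unfolding S1_def .
qed

lemma cont_S2: "continuous_on UNIV (\<lambda>x::real \<times> emb. S2 (fst x) (snd x))"
proof -
  have A: "continuous_on UNIV (\<lambda>x::real \<times> emb. \<lambda>i. if i = 0 then fst x * snd (snd x) 0 else snd (snd x) i)"
  proof (rule continuous_on_coordinatewise_then_product)
    fix i
    have c: "continuous_on UNIV (\<lambda>x::real \<times> emb. snd (snd x) j)" for j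
      by (rule cc) (intro continuous_on_snd continuous_on_id)
    show "continuous_on UNIV (\<lambda>x::real \<times> emb. if i = 0 then fst x * snd (snd x) 0 else snd (snd x) i)"
      by (cases "i = 0") (simp_all add: c continuous_on_mult continuous_on_fst continuous_on_id)
  qed
  have B: "continuous_on UNIV (\<lambda>x::real \<times> emb. fst (snd x) / 4)"
    by (intro continuous_on_divide continuous_on_fst continuous_on_snd continuous_on_id continuous_on_const) auto
  have "continuous_on UNIV (\<lambda>x::real \<times> emb. (fst (snd x) / 4, \<lambda>i. if i = 0 then fst x * snd (snd x) 0 else snd (snd x) i))"
    by (rule continuous_on_Pair[OF B A])
  then show ?thesis unfolding S2_def .
qed

lemma hom_lemma:
  assumes "continuous_on ({0..1::real} \<times> X) h" "\<forall>t\<in>{0..1::real}. \<forall>x\<in>X. h (t, x) \<in> Y"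
    "\<forall>x\<in>X. h (0, x) = f x" "\<forall>x\<in>X. h (1, x) = g x"
  shows "homotopic_with (\<lambda>_. True) (top_of_set X) (top_of_set Y) f g"
proof -
  have "continuous_map (top_of_set ({0..1} \<times> X)) (top_of_set Y) h"
    using assms by (auto simp: continuous_map_subtopology_eu image_subset_iff)
  then have H: "continuous_map (prod_topology (top_of_set {0..1}) (top_of_set X)) (top_of_set Y) h"
    by simp
  show ?thesis
    apply (subst homotopic_with)
     apply simp
    apply (rule exI[where x=h])
    using H assms by auto
qed

lemma op_eid: "fs \<in> op_space H p k \<Longrightarrow> \<not> l < k \<Longrightarrow> fs l = eid"
  unfolding op_space_def by auto

theorem mainTheorem6:
  fixes n :: nat
  assumes "2 \<le> n"
  shows "operads_homotopy_equivalent (rect n) (CD_perp n) (rect (n - 1)) (Disc_perp (n - 1))"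
proof -
  obtain m where n: "n = Suc m" using assms by (cases n) auto
  define CDs where "CDs k = op_space (rect (Suc m)) (CD_perp (Suc m)) k" for k
  define Ds where "Ds k = op_space (rect m) (Disc_perp m) k" for k
  define F where "F = (\<lambda>(k::nat) (fs::tup) (l::nat). Pm (fs l))"
  define G where "G = (\<lambda>(k::nat) (fs::tup) (l::nat). if l < k then Qm (fs l) else eid)"
  define M where "M = (\<lambda>(k::nat) (fs::tup) (l::nat). if l < k then S1 0 (fs l) else eid)"
  have opeid: "fs l = eid" if "fs \<in> op_space H p k" "\<not> l < k" for fs l H p k
    using that unfolding op_space_def by auto
  have FEQ: "F k fs = (\<lambda>l. if l < k then Pm (fs l) else eid)" if "fs \<in> CDs k" for k fs
  proof -
    have "fs l = eid" if "\<not> l < k" for l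
      using opeid[of fs "rect (Suc m)" "CD_perp (Suc m)" k l] \<open>fs \<in> CDs k\<close> that unfolding CDs_def by blast
    then show ?thesis unfolding F_def by (auto simp: Pm_eid fun_eq_iff)
  qed
  have Fmap: "F k fs \<in> Ds k" if "fs \<in> CDs k" for k fs
    unfolding FEQ[OF that] Ds_def using that unfolding CDs_def
    by (intro op_map) (auto intro: Pm_rect Pm_perp)
  have Gmap: "G k fs \<in> CDs k" if "fs \<in> Ds k" for k fs
    unfolding G_def CDs_def using that unfolding Ds_def
    by (intro op_map) (auto intro: Qm_rect Qm_perp)
  have Fcont: "continuous_map (op_top (rect (Suc m)) (CD_perp (Suc m)) k) (op_top (rect m) (Disc_perp m) k) (F k)" for k
  proof -
    have "continuous_on UNIV (F k)" unfolding F_def by (rule cont_tup0[OF cont_Pm])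
    then show ?thesis unfolding op_top_def continuous_map_subtopology_eu
      using Fmap unfolding CDs_def Ds_def by (auto intro: continuous_on_subset)
  qed
  have Gcont: "continuous_map (op_top (rect m) (Disc_perp m) k) (op_top (rect (Suc m)) (CD_perp (Suc m)) k) (G k)" for k
  proof -
    have "continuous_on UNIV (G k)" unfolding G_def by (rule cont_tup[OF cont_Qm])
    then show ?thesis unfolding op_top_def continuous_map_subtopology_eu
      using Gmap unfolding CDs_def Ds_def by (auto intro: continuous_on_subset)
  qed
  have H1: "homotopic_with (\<lambda>_. True) (op_top (rect (Suc m)) (CD_perp (Suc m)) k) (op_top (rect (Suc m)) (CD_perp (Suc m)) k) (G k \<circ> F k) id" for k
  proof -
    have a: "homotopic_with (\<lambda>_. True) (top_of_set (CDs k)) (top_of_set (CDs k)) (G k \<circ> F k) (M k)"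
    proof (rule hom_lemma)
      show "continuous_on ({0..1::real} \<times> CDs k) (\<lambda>x. \<lambda>l. if l < k then S2 (fst x) (snd x l) else eid)"
        by (rule continuous_on_subset[OF cont_tup2[OF cont_S2]]) simp
      show "\<forall>t\<in>{0..1::real}. \<forall>x\<in>CDs k. (\<lambda>x. \<lambda>l. if l < k then S2 (fst x) (snd x l) else eid) (t, x) \<in> CDs k"
      proof (intro ballI)
        fix t :: real and x assume tx: "t \<in> {0..1}" "x \<in> CDs k"
        have "(\<lambda>l. if l < k then S2 t (x l) else eid) \<in> CDs k"
          unfolding CDs_def by (rule op_map) (use tx in \<open>auto simp: CDs_def intro: S2_rect S2_perp\<close>)
        then show "(\<lambda>x. \<lambda>l. if l < k then S2 (fst x) (snd x l) else eid) (t, x) \<in> CDs k" by (simp only: fst_conv snd_conv)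
      qed
      show "\<forall>x\<in>CDs k. (\<lambda>x. \<lambda>l. if l < k then S2 (fst x) (snd x l) else eid) (0, x) = (G k \<circ> F k) x"
        by (auto simp: G_def F_def fun_eq_iff QP)
      show "\<forall>x\<in>CDs k. (\<lambda>x. \<lambda>l. if l < k then S2 (fst x) (snd x l) else eid) (1, x) = M k x"
        by (auto simp: M_def fun_eq_iff S21)
    qed
    have b: "homotopic_with (\<lambda>_. True) (top_of_set (CDs k)) (top_of_set (CDs k)) (M k) id"
    proof (rule hom_lemma)
      show "continuous_on ({0..1::real} \<times> CDs k) (\<lambda>x. \<lambda>l. if l < k then S1 (fst x) (snd x l) else eid)"
        by (rule continuous_on_subset[OF cont_tup2[OF cont_S1]]) simp
      show "\<forall>t\<in>{0..1::real}. \<forall>x\<in>CDs k. (\<lambda>x. \<lambda>l. if l < k then S1 (fst x) (snd x l) else eid) (t, x) \<in> CDs k"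
      proof (intro ballI)
        fix t :: real and x assume tx: "t \<in> {0..1}" "x \<in> CDs k"
        have "(\<lambda>l. if l < k then S1 t (x l) else eid) \<in> CDs k"
          unfolding CDs_def by (rule op_map) (use tx in \<open>auto simp: CDs_def intro: S1_rect S1_perp_CD\<close>)
        then show "(\<lambda>x. \<lambda>l. if l < k then S1 (fst x) (snd x l) else eid) (t, x) \<in> CDs k" by (simp only: fst_conv snd_conv)
      qed
      show "\<forall>x\<in>CDs k. (\<lambda>x. \<lambda>l. if l < k then S1 (fst x) (snd x l) else eid) (0, x) = M k x"
        by (auto simp: M_def fun_eq_iff)
      show "\<forall>x\<in>CDs k. (\<lambda>x. \<lambda>l. if l < k then S1 (fst x) (snd x l) else eid) (1, x) = id x"
        unfolding CDs_def by (auto simp: fun_eq_iff S11 op_eid)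
    qed
    show ?thesis using homotopic_with_trans[OF a b] unfolding op_top_def CDs_def .
  qed
  have H2: "homotopic_with (\<lambda>_. True) (op_top (rect m) (Disc_perp m) k) (op_top (rect m) (Disc_perp m) k) (F k \<circ> G k) id" for k
  proof -
    have "homotopic_with (\<lambda>_. True) (top_of_set (Ds k)) (top_of_set (Ds k)) (F k \<circ> G k) id"
    proof (rule hom_lemma)
      show "continuous_on ({0..1::real} \<times> Ds k) (\<lambda>x. \<lambda>l. if l < k then S1 (fst x) (snd x l) else eid)"
        by (rule continuous_on_subset[OF cont_tup2[OF cont_S1]]) simp
      show "\<forall>t\<in>{0..1::real}. \<forall>x\<in>Ds k. (\<lambda>x. \<lambda>l. if l < k then S1 (fst x) (snd x l) else eid) (t, x) \<in> Ds k"
      proof (intro ballI)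
        fix t :: real and x assume tx: "t \<in> {0..1}" "x \<in> Ds k"
        have "(\<lambda>l. if l < k then S1 t (x l) else eid) \<in> Ds k"
          unfolding Ds_def by (rule op_map) (use tx in \<open>auto simp: Ds_def intro: S1_rect S1_perp_Disc\<close>)
        then show "(\<lambda>x. \<lambda>l. if l < k then S1 (fst x) (snd x l) else eid) (t, x) \<in> Ds k" by (simp only: fst_conv snd_conv)
      qed
      show "\<forall>x\<in>Ds k. (\<lambda>x. \<lambda>l. if l < k then S1 (fst x) (snd x l) else eid) (0, x) = (F k \<circ> G k) x"
        by (auto simp: G_def F_def fun_eq_iff PQ Pm_eid)
      show "\<forall>x\<in>Ds k. (\<lambda>x. \<lambda>l. if l < k then S1 (fst x) (snd x l) else eid) (1, x) = id x"
        unfolding Ds_def by (auto simp: fun_eq_iff S11 op_eid)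
    qed
    then show ?thesis unfolding op_top_def Ds_def .
  qed
  have mor: "operad_morphism (rect (Suc m)) (CD_perp (Suc m)) (rect m) (Disc_perp m) F"
    unfolding operad_morphism_def
  proof (intro conjI allI impI)
    show "continuous_map (op_top (rect (Suc m)) (CD_perp (Suc m)) k) (op_top (rect m) (Disc_perp m) k) (F k)" for k
      by (rule Fcont)
    show "F 1 (\<lambda>_. eid) = (\<lambda>_. eid)" by (simp add: F_def Pm_eid)
    show "F (k + j - 1) (pcomp k i f j g) = pcomp k i (F k f) j (F j g)" for k i j f g
      by (auto simp: F_def pcomp_def fun_eq_iff Pm_eid Pm_ecomp)
    show "F k (sact k \<sigma> f) = sact k \<sigma> (F k f)" for k \<sigma> f
      by (auto simp: F_def sact_def fun_eq_iff Pm_eid)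
  qed
  have "operad_hequiv_map (rect (Suc m)) (CD_perp (Suc m)) (rect m) (Disc_perp m) F"
    unfolding operad_hequiv_map_def
    using mor Gcont H1 H2 by blast
  then show ?thesis unfolding operads_homotopy_equivalent_def n by auto
qed

end
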